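(* Let $(L,\omega,\upsilon)$ be a Krein--Langer string with data $\kappa,\{x_j\},\{\omega_j\},\{\upsilon_j\}$. Define $\mathsf w(x):=\omega([0,x))$, $\mathsf v(x):=\upsilon([0,x))$ for $x\in[0,L)$, $\varsigma(x):=x+\mathsf v(x)+\int_0^x\mathsf w(t)^2dt$ for $x\in[0,L]$ (with $\varsigma(L)\in(0,\infty]$ defined by the same formula, $\mathsf v(L):=\upsilon([0,L))$), $\xi(s):=\sup\{x\in[0,L):\varsigma(x)\le s\}$ for $s\ge0$, and $$H(s):=\begin{pmatrix}1-\xi'(s)&\xi'(s)\mathsf w(\xi(s))\\ \xi'(s)\mathsf w(\xi(s))&\xi'(s)\end{pmatrix},\quad s\in[0,\infty).$$ Let $\mathsf w_k:=\sum_{i=0}^k\omega_i$ and choose $\theta_k\in(0,\pi)$ with $\cot(\theta_k)=\mathsf w_k$. Then for almost every $s\ge0$: $H(s)=H_{\pi/2}$ if $s\in(0,x_0)$; $H(s)=H_0$ if $s\in(\varsigma(x_k),\varsigma(x_k+))$ for some $k\in\{0,\dots,\kappa-1\}$; $H(s)=H_{\theta_k}$ if $s\in(\varsigma(x_k+),\varsigma(x_{k+1}))$ for some $k\in\{0,\dots,\kappa-1\}$ (with $x_\kappa:=L$ if $\kappa<\infty$); and $H(s)=H_0$ if $s\in(\varsigma(L),\infty)$. In particular, $H$ restricted to $[0,\varsigma(L))$ is a Hamburger Hamiltonian of length $\varsigma(L)$.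
   Context: Krein--Langer string: a triple $(L,\omega,\upsilon)$ where $L\in(0,\infty]$, $\kappa\in\mathbb Z_{\ge0}\cup\{\infty\}$, $0=:x_{-1}<x_0<x_1<\dots<L$ is a sequence $\{x_j\}_{j=0}^{\kappa-1}$, $\{\omega_j\}_{j=0}^{\kappa-1}$ are reals and $\{\upsilon_j\}_{j=0}^{\kappa-1}$ non-negative reals with $|\omega_j|+\upsilon_j>0$; if $\kappa=\infty$ then $x_j\to L$, and if $\kappa<\infty$ then $x_{\kappa-1}<L$; $\omega:=\sum_j\omega_j\delta_{x_j}$, $\upsilon:=\sum_j\upsilon_j\delta_{x_j}$. For $\theta\in\mathbb R$, $H_\theta:=\begin{pmatrix}\cos^2\theta&\cos\theta\sin\theta\\ \cos\theta\sin\theta&\sin^2\theta\end{pmatrix}$, so $H_0=\begin{pmatrix}1&0\\0&0\end{pmatrix}$ and $H_{\pi/2}=\begin{pmatrix}0&0\\0&1\end{pmatrix}$. A Hamburger Hamiltonian on $[0,L')$ is a function of the form $\sum_{k=0}^NH_{\vartheta_k}\mathbb 1_{[y_{k-1},y_k)}$ with $y_{-1}=0<y_0<y_1<\dots$, $\vartheta_0=\pi/2$, $\vartheta_k<\vartheta_{k+1}<\vartheta_k+\pi$, and $\vartheta_N\notin\pi\mathbb Z$ if $N<\infty$. The notation $\varsigma(x_k+)$ means the right limit of $\varsigma$ at $x_k$. *)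

theory Defs
  imports "HOL-Analysis.Analysis"
begin

text \<open>Krein--Langer string data: L in (0,inf] (as ereal), kappa in N u {inf} (as enat),
  points x j, masses omega j, upsilon j, only indices j < kappa are relevant.\<close>

definition KL_string :: "ereal \<Rightarrow> enat \<Rightarrow> (nat \<Rightarrow> real) \<Rightarrow> (nat \<Rightarrow> real) \<Rightarrow> (nat \<Rightarrow> real) \<Rightarrow> bool" where
  "KL_string L \<kappa> x \<omega> \<upsilon> \<longleftrightarrow>
     0 < L \<and>
     (0 < \<kappa> \<longrightarrow> 0 < x 0) \<and>
     (\<forall>j. enat (Suc j) < \<kappa> \<longrightarrow> x j < x (Suc j)) \<and>
     (\<forall>j. enat j < \<kappa> \<longrightarrow> ereal (x j) < L \<and> 0 \<le> \<upsilon> j \<and> 0 < \<bar>\<omega> j\<bar> + \<upsilon> j) \<and>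
     (\<kappa> = \<infinity> \<longrightarrow> (\<lambda>j. ereal (x j)) \<longlonglongrightarrow> L)"

definition KL_w :: "enat \<Rightarrow> (nat \<Rightarrow> real) \<Rightarrow> (nat \<Rightarrow> real) \<Rightarrow> real \<Rightarrow> real" where
  "KL_w \<kappa> x \<omega> t = (\<Sum>j \<in> {j. enat j < \<kappa> \<and> x j < t}. \<omega> j)"

definition KL_sigma :: "enat \<Rightarrow> (nat \<Rightarrow> real) \<Rightarrow> (nat \<Rightarrow> real) \<Rightarrow> (nat \<Rightarrow> real) \<Rightarrow> ereal \<Rightarrow> ereal" where
  "KL_sigma \<kappa> x \<omega> \<upsilon> y =
     y + enn2ereal (\<Sum>j. if enat j < \<kappa> \<and> ereal (x j) < y then ennreal (\<upsilon> j) else 0)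
       + enn2ereal (\<integral>\<^sup>+ t. indicator {t. 0 \<le> t \<and> ereal t < y} t * ennreal ((KL_w \<kappa> x \<omega> t)\<^sup>2) \<partial>lborel)"

definition KL_sigma_real :: "enat \<Rightarrow> (nat \<Rightarrow> real) \<Rightarrow> (nat \<Rightarrow> real) \<Rightarrow> (nat \<Rightarrow> real) \<Rightarrow> real \<Rightarrow> real" where
  "KL_sigma_real \<kappa> x \<omega> \<upsilon> t = real_of_ereal (KL_sigma \<kappa> x \<omega> \<upsilon> (ereal t))"

definition KL_sigma_plus :: "enat \<Rightarrow> (nat \<Rightarrow> real) \<Rightarrow> (nat \<Rightarrow> real) \<Rightarrow> (nat \<Rightarrow> real) \<Rightarrow> nat \<Rightarrow> real" where
  "KL_sigma_plus \<kappa> x \<omega> \<upsilon> k = Lim (at_right (x k)) (KL_sigma_real \<kappa> x \<omega> \<upsilon>)"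

definition KL_xnext :: "ereal \<Rightarrow> enat \<Rightarrow> (nat \<Rightarrow> real) \<Rightarrow> nat \<Rightarrow> ereal" where
  "KL_xnext L \<kappa> x j = (if enat j < \<kappa> then ereal (x j) else L)"

definition KL_xi :: "ereal \<Rightarrow> enat \<Rightarrow> (nat \<Rightarrow> real) \<Rightarrow> (nat \<Rightarrow> real) \<Rightarrow> (nat \<Rightarrow> real) \<Rightarrow> real \<Rightarrow> real" where
  "KL_xi L \<kappa> x \<omega> \<upsilon> s = Sup {t. 0 \<le> t \<and> ereal t < L \<and> KL_sigma \<kappa> x \<omega> \<upsilon> (ereal t) \<le> ereal s}"

definition mat2 :: "real \<Rightarrow> real \<Rightarrow> real \<Rightarrow> real \<Rightarrow> real^2^2" where
  "mat2 a b c d = vector [vector [a, b], vector [c, d]]"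

definition Hth :: "real \<Rightarrow> real^2^2" where
  "Hth \<theta> = mat2 ((cos \<theta>)\<^sup>2) (cos \<theta> * sin \<theta>) (cos \<theta> * sin \<theta>) ((sin \<theta>)\<^sup>2)"

definition KL_H :: "ereal \<Rightarrow> enat \<Rightarrow> (nat \<Rightarrow> real) \<Rightarrow> (nat \<Rightarrow> real) \<Rightarrow> (nat \<Rightarrow> real) \<Rightarrow> real \<Rightarrow> real^2^2" where
  "KL_H L \<kappa> x \<omega> \<upsilon> s =
     (let d = deriv (KL_xi L \<kappa> x \<omega> \<upsilon>) s; a = KL_xi L \<kappa> x \<omega> \<upsilon> s
      in mat2 (1 - d) (d * KL_w \<kappa> x \<omega> a) (d * KL_w \<kappa> x \<omega> a) d)"

text \<open>Hamburger Hamiltonian on [0,Lp): (a.e.) equal to sum_{k=0}^N H_{theta_k} 1_{[y_{k-1},y_k)},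
  y_{-1} = 0 < y_0 < y_1 < ..., with y_N = Lp if N finite and y_k -> Lp if N infinite.\<close>
definition hamburger_hamiltonian :: "ereal \<Rightarrow> (real \<Rightarrow> real^2^2) \<Rightarrow> bool" where
  "hamburger_hamiltonian Lp Hf \<longleftrightarrow>
     (\<exists>(N::enat) (y::nat \<Rightarrow> ereal) (\<phi>::nat \<Rightarrow> real).
        0 < y 0 \<and>
        (\<forall>k. enat (Suc k) \<le> N \<longrightarrow> y k < y (Suc k)) \<and>
        \<phi> 0 = pi / 2 \<and>
        (\<forall>k. enat (Suc k) \<le> N \<longrightarrow> \<phi> k < \<phi> (Suc k) \<and> \<phi> (Suc k) < \<phi> k + pi) \<and>
        (N \<noteq> \<infinity> \<longrightarrow> (\<nexists>n::int. \<phi> (the_enat N) = of_int n * pi)) \<and>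
        (N \<noteq> \<infinity> \<longrightarrow> y (the_enat N) = Lp) \<and>
        (N = \<infinity> \<longrightarrow> y \<longlonglongrightarrow> Lp) \<and>
        (AE s in lborel. 0 \<le> s \<and> ereal s < Lp \<longrightarrow>
           (\<forall>k. enat k \<le> N \<longrightarrow> (if k = 0 then 0 else y (k - 1)) \<le> ereal s \<longrightarrow> ereal s < y k
                \<longrightarrow> Hf s = Hth (\<phi> k))))"

end

theory Submission
  imports Defs
begin

fun nxt :: "(nat \<Rightarrow> real) \<Rightarrow> nat \<times> bool \<Rightarrow> nat \<times> bool" where
  "nxt v (m, True) = (m, False)"
| "nxt v (m, False) = (if 0 < v m then (Suc m, True) else (Suc m, False))"

definition pst :: "(nat \<Rightarrow> real) \<Rightarrow> nat \<Rightarrow> nat \<times> bool" where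
  "pst v n = (nxt v ^^ n) (0, False)"

lemma pst_0: "pst v 0 = (0, False)" unfolding pst_def by simp
lemma pst_Suc: "pst v (Suc n) = nxt v (pst v n)" unfolding pst_def by simp

lemma nxt_fst: "fst st \<le> fst (nxt v st)" by (cases st; cases "snd st") auto

lemma pst_mono: "incseq (\<lambda>n. fst (pst v n))"
  by (rule incseq_SucI) (simp add: pst_Suc nxt_fst)

lemma pst_inv: "snd (pst v n) \<Longrightarrow> 0 < fst (pst v n) \<and> 0 < v (fst (pst v n) - 1)"
proof (induction n)
  case 0 then show ?case by (simp add: pst_0)
next
  case (Suc n)
  obtain m b where mb: "pst v n = (m, b)" by fastforce
  show ?case
  proof (cases b)
    case True
    then show ?thesis using Suc.prems mb by (simp add: pst_Suc)
  next
    case False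
    show ?thesis
    proof (cases "0 < v m")
      case True
      then show ?thesis using mb False by (simp add: pst_Suc)
    next
      case F2: False
      then show ?thesis using mb False Suc.prems by (simp add: pst_Suc)
    qed
  qed
qed

definition idx :: "(nat \<Rightarrow> real) \<Rightarrow> nat \<Rightarrow> nat" where
  "idx v m = m + card {i. i < m \<and> 0 < v i}"

lemma card_Suc_filter: "card {i. i < Suc m \<and> P i} = card {i. i < m \<and> P i} + (if P m then 1 else 0)"
proof (cases "P m")
  case True
  then have "{i. i < Suc m \<and> P i} = insert m {i. i < m \<and> P i}" by (auto simp: less_Suc_eq)
  moreover have "card (insert m {i. i < m \<and> P i}) = Suc (card {i. i < m \<and> P i})"
    by (rule card_insert_disjoint) auto
  ultimately show ?thesis using True by simp
next
  case False
  then have "{i. i < Suc m \<and> P i} = {i. i < m \<and> P i}" by (auto simp: less_Suc_eq)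
  then show ?thesis using False by simp
qed

lemma idx_Suc: "idx v (Suc m) = (if 0 < v m then Suc (Suc (idx v m)) else Suc (idx v m))"
  unfolding idx_def card_Suc_filter by simp

lemma pst_idx: "pst v (idx v m) = (m, False)"
proof (induction m)
  case 0 then show ?case by (simp add: idx_def pst_0)
next
  case (Suc m)
  then show ?case by (simp add: idx_Suc pst_Suc)
qed

lemma idx_smono: "strict_mono (idx v)"
  by (rule strict_monoI_Suc) (simp add: idx_Suc)

definition lift :: "real \<Rightarrow> real \<Rightarrow> real" where
  "lift a t = t + pi * (of_int \<lfloor>(a - t) / pi\<rfloor> + 1)"

lemma lift_gt: "a < lift a t"
proof -
  have "(a - t) / pi < of_int \<lfloor>(a - t) / pi\<rfloor> + 1" by linarith
  then have "a - t < pi * (of_int \<lfloor>(a - t) / pi\<rfloor> + 1)" using pi_gt_zero by (simp add: field_simps)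
  then show ?thesis unfolding lift_def by simp
qed

lemma lift_lt: assumes "\<nexists>z::int. t = a + of_int z * pi" shows "lift a t < a + pi"
proof -
  have "of_int \<lfloor>(a - t) / pi\<rfloor> \<le> (a - t) / pi" by linarith
  moreover have "of_int \<lfloor>(a - t) / pi\<rfloor> \<noteq> (a - t) / pi"
  proof
    assume h: "of_int \<lfloor>(a - t) / pi\<rfloor> = (a - t) / pi"
    have "a - t = (a - t) / pi * pi" by simp
    also have "\<dots> = of_int \<lfloor>(a - t) / pi\<rfloor> * pi" unfolding h ..
    finally have "t = a + of_int (- \<lfloor>(a - t) / pi\<rfloor>) * pi" by simp
    then show False using assms by blast
  qed
  ultimately have "of_int \<lfloor>(a - t) / pi\<rfloor> < (a - t) / pi" by (meson less_eq_real_def)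
  then have "pi * of_int \<lfloor>(a - t) / pi\<rfloor> < a - t" using pi_gt_zero by (simp add: field_simps)
  then show ?thesis unfolding lift_def by (simp add: algebra_simps)
qed

lemma lift_cong: "\<exists>z::int. lift a t = t + of_int z * pi"
  unfolding lift_def by (rule exI[of _ "\<lfloor>(a - t) / pi\<rfloor> + 1"]) (simp add: algebra_simps)

lemma int_pi_between: "0 < of_int z * pi \<Longrightarrow> of_int z * pi < pi \<Longrightarrow> False"
proof -
  assume a: "0 < of_int z * pi" "of_int z * pi < pi"
  then have "(0::real) < of_int z" "of_int z < (1::real)" using pi_gt_zero by (auto simp: zero_less_mult_iff)
  then have "0 < z" "z < 1" by simp_all
  then show False by simp
qed

lemma int_pi_small: "\<bar>of_int z * pi\<bar> < pi \<Longrightarrow> z = 0"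
proof -
  assume "\<bar>of_int z * pi\<bar> < pi"
  then have "\<bar>of_int z\<bar> < (1::real)" using pi_gt_zero by (simp add: abs_mult)
  then show "z = 0" by linarith
qed

definition ang :: "real \<Rightarrow> real" where "ang c = pi / 2 - arctan c"

lemma ang_bounds: "0 < ang c" "ang c < pi"
  unfolding ang_def using arctan_bounded[of c] by auto

lemma ang_cot: "cot (ang c) = c"
proof -
  have "cot (ang c) = sin (arctan c) / cos (arctan c)" unfolding ang_def cot_def cos_diff sin_diff by simp
  also have "\<dots> = c" using tan_arctan[of c] unfolding tan_def .
  finally show ?thesis .
qed

lemma Hth_per: "Hth (t + of_int z * pi) = Hth t"
proof -
  have s: "sin (of_int z * pi) = 0" using sin_npi_int[of z] by (simp add: mult.commute)
  have c: "(cos (of_int z * pi))\<^sup>2 = 1" using s sin_cos_squared_add[of "of_int z * pi"] by simp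
  have "cos (t + of_int z * pi) = cos t * cos (of_int z * pi)" "sin (t + of_int z * pi) = sin t * cos (of_int z * pi)"
    unfolding cos_add sin_add s by simp_all
  then show ?thesis unfolding Hth_def using c
    by (simp add: power_mult_distrib algebra_simps power2_eq_square)
qed

locale kls =
  fixes L :: ereal and \<kappa> :: enat and x \<omega> \<upsilon> :: "nat \<Rightarrow> real"
  assumes str: "KL_string L \<kappa> x \<omega> \<upsilon>"
begin

abbreviation "sg \<equiv> KL_sigma \<kappa> x \<omega> \<upsilon>"
abbreviation "ww \<equiv> KL_w \<kappa> x \<omega>"
definition J :: "real \<Rightarrow> nat set" where "J t = {j. enat j < \<kappa> \<and> x j < t}"

lemma Lpos: "0 < L" using str unfolding KL_string_def by auto
lemma upos: "enat j < \<kappa> \<Longrightarrow> 0 \<le> \<upsilon> j" using str unfolding KL_string_def by auto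
lemma wu: "enat j < \<kappa> \<Longrightarrow> 0 < \<bar>\<omega> j\<bar> + \<upsilon> j" using str unfolding KL_string_def by auto
lemma xL: "enat j < \<kappa> \<Longrightarrow> ereal (x j) < L" using str unfolding KL_string_def by auto
lemma xsuc: "enat (Suc j) < \<kappa> \<Longrightarrow> x j < x (Suc j)" using str unfolding KL_string_def by auto
lemma xlim: "\<kappa> = \<infinity> \<Longrightarrow> (\<lambda>j. ereal (x j)) \<longlonglongrightarrow> L" using str unfolding KL_string_def by auto

lemma xmono: "j < k \<Longrightarrow> enat k < \<kappa> \<Longrightarrow> x j < x k"
proof (induction k)
  case 0 then show ?case by simp
next
  case (Suc k)
  have k: "enat k < \<kappa>" using Suc.prems by (meson Suc_ile_eq less_imp_le order_le_less_trans enat_ord_simps(2) lessI)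
  show ?case
  proof (cases "j = k")
    case True then show ?thesis using xsuc Suc.prems by simp
  next
    case False then show ?thesis using Suc.IH[of] Suc.prems k xsuc[of k] by simp
  qed
qed

lemma xmono_le: "j \<le> k \<Longrightarrow> enat k < \<kappa> \<Longrightarrow> x j \<le> x k"
  using xmono by (metis le_less order_refl)

lemma x0pos: "0 < \<kappa> \<Longrightarrow> 0 < x 0" using str unfolding KL_string_def by auto

lemma xpos: "enat k < \<kappa> \<Longrightarrow> 0 < x k"
proof -
  assume a: "enat k < \<kappa>"
  have "0 < \<kappa>" using a by (metis zero_le le_less_trans)
  then show ?thesis using x0pos xmono_le[of 0 k] a by force
qed


lemma J_mono: "s \<le> t \<Longrightarrow> J s \<subseteq> J t" unfolding J_def by auto

lemma Jfin: assumes "\<kappa> \<noteq> \<infinity> \<or> ereal t < L" shows "finite (J t)"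
proof (cases "\<kappa> = \<infinity>")
  case False
  then obtain K where K: "\<kappa> = enat K" by auto
  have "J t \<subseteq> {..<K}" unfolding J_def using K by auto
  then show ?thesis using finite_subset by blast
next
  case True
  then have t: "ereal t < L" using assms by auto
  have "eventually (\<lambda>j. ereal t < ereal (x j)) sequentially"
    using order_tendstoD(1)[OF xlim[OF True] t] .
  then obtain N where N: "\<And>j. j \<ge> N \<Longrightarrow> t < x j" by (auto simp: eventually_sequentially)
  have "J t \<subseteq> {..<N}" unfolding J_def using N by (metis (mono_tags, lifting) lessThan_iff linorder_not_le mem_Collect_eq order.asym subsetI)
  then show ?thesis using finite_subset by blast
qed

lemma enat_lt_trans_Suc: "enat (Suc k) < \<kappa> \<Longrightarrow> enat k < \<kappa>"
  by (meson Suc_ile_eq less_imp_le order_le_less_trans enat_ord_simps(2) lessI)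

lemma xnext_le_L: "KL_xnext L \<kappa> x k \<le> L"
  unfolding KL_xnext_def using xL by (auto simp: less_imp_le)

lemma J_xnext: assumes k: "enat k < \<kappa>" and t: "x k < t" "ereal t \<le> KL_xnext L \<kappa> x (Suc k)"
  shows "J t = {..k}"
proof
  show "{..k} \<subseteq> J t"
  proof
    fix j assume "j \<in> {..k}"
    then have j: "j \<le> k" by auto
    have "enat j < \<kappa>" using j k by (meson enat_ord_simps(1) le_less_trans)
    moreover have "x j < t" using xmono_le[OF j k] t(1) by linarith
    ultimately show "j \<in> J t" unfolding J_def by auto
  qed
  show "J t \<subseteq> {..k}"
  proof
    fix j assume j: "j \<in> J t"
    show "j \<in> {..k}"
    proof (rule ccontr)
      assume "j \<notin> {..k}"
      then have jk: "Suc k \<le> j" by auto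
      have jk2: "enat j < \<kappa>" "x j < t" using j unfolding J_def by auto
      have sk: "enat (Suc k) < \<kappa>" using jk jk2 by (meson enat_ord_simps(1) le_less_trans)
      then have "ereal t \<le> ereal (x (Suc k))" using t unfolding KL_xnext_def by auto
      moreover have "x (Suc k) \<le> x j" using xmono_le[OF jk jk2(1)] .
      ultimately show False using jk2 by auto
    qed
  qed
qed

lemma J0: assumes "ereal t \<le> KL_xnext L \<kappa> x 0" shows "J t = {}"
proof (cases "0 < \<kappa>")
  case True
  then have "t \<le> x 0" using assms unfolding KL_xnext_def by (auto simp: zero_enat_def)
  then show ?thesis unfolding J_def using xmono_le[of 0] by (force)
next
  case False then show ?thesis unfolding J_def by (auto simp: zero_enat_def[symmetric] )
qed

lemma J_xk: assumes "enat k < \<kappa>" shows "J (x k) = {..<k}"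
proof
  show "{..<k} \<subseteq> J (x k)" unfolding J_def using xmono assms
    by (auto intro: order_less_trans[OF enat_ord_simps(2)[THEN iffD2]])
  show "J (x k) \<subseteq> {..<k}" unfolding J_def using xmono_le assms by (force simp: not_less[symmetric])
qed

lemma ww_J: "ww t = sum \<omega> (J t)" unfolding KL_w_def J_def by simp

lemma A_fin: assumes "finite (J t)"
  shows "(\<Sum>j. if enat j < \<kappa> \<and> ereal (x j) < ereal t then ennreal (\<upsilon> j) else 0) = ennreal (sum \<upsilon> (J t))"
proof -
  have "(\<Sum>j. if enat j < \<kappa> \<and> ereal (x j) < ereal t then ennreal (\<upsilon> j) else 0)
      = (\<Sum>j\<in>J t. if enat j < \<kappa> \<and> ereal (x j) < ereal t then ennreal (\<upsilon> j) else 0)"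
    by (rule suminf_finite[OF assms]) (auto simp: J_def)
  also have "\<dots> = (\<Sum>j\<in>J t. ennreal (\<upsilon> j))" by (rule sum.cong) (auto simp: J_def)
  also have "\<dots> = ennreal (sum \<upsilon> (J t))" by (rule sum_ennreal) (auto simp: J_def upos)
  finally show ?thesis .
qed

definition wh :: "nat set \<Rightarrow> real \<Rightarrow> real" where
  "wh F s = (\<Sum>j\<in>F. if x j < s then \<omega> j else 0)"

lemma ww_wh: assumes "finite (J t)" "s \<le> t" shows "ww s = wh (J t) s"
proof -
  have "J s = {j \<in> J t. x j < s}" unfolding J_def using assms(2) by auto
  then show ?thesis unfolding ww_J wh_def using sum.inter_filter[OF assms(1)] by simp
qed

lemma wh_meas: "(\<lambda>s. indicator S s * ennreal ((wh F s)\<^sup>2)) \<in> borel_measurable lborel"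
  if "S \<in> sets lborel" using that unfolding wh_def by measurable

abbreviation "BB t \<equiv> (\<integral>\<^sup>+ s. indicator {s. 0 \<le> s \<and> ereal s < ereal t} s * ennreal ((ww s)\<^sup>2) \<partial>lborel)"

lemma B_incr: assumes "0 \<le> u" "u \<le> t" "finite (J t)" "\<forall>s. u < s \<and> s \<le> t \<longrightarrow> J s = J t"
  shows "BB t = BB u + ennreal ((sum \<omega> (J t))\<^sup>2 * (t - u))"
proof -
  define F where "F = J t"
  define c where "c = sum \<omega> F"
  have eq1: "BB t = (\<integral>\<^sup>+ s. indicator {0..<t} s * ennreal ((wh F s)\<^sup>2) \<partial>lborel)"
  proof (rule nn_integral_cong)
    fix s show "indicator {s. 0 \<le> s \<and> ereal s < ereal t} s * ennreal ((ww s)\<^sup>2) = indicator {0..<t} s * ennreal ((wh F s)\<^sup>2)"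
    proof (cases "0 \<le> s \<and> s < t")
      case True
      then have "ww s = wh F s" using ww_wh[OF assms(3), of s] unfolding F_def by simp
      moreover have "s \<in> {s. 0 \<le> s \<and> ereal s < ereal t}" "s \<in> {0..<t}" using True by auto
      ultimately show ?thesis by simp
    next
      case False
      then have "s \<notin> {s. 0 \<le> s \<and> ereal s < ereal t}" "s \<notin> {0..<t}" by auto
      then show ?thesis by simp
    qed
  qed
  have eq2: "BB u = (\<integral>\<^sup>+ s. indicator {0..<u} s * ennreal ((wh F s)\<^sup>2) \<partial>lborel)"
  proof (rule nn_integral_cong)
    fix s show "indicator {s. 0 \<le> s \<and> ereal s < ereal u} s * ennreal ((ww s)\<^sup>2) = indicator {0..<u} s * ennreal ((wh F s)\<^sup>2)"
    proof (cases "0 \<le> s \<and> s < u")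
      case True
      then have "ww s = wh F s" using ww_wh[OF assms(3), of s] assms(2) unfolding F_def by simp
      moreover have "s \<in> {s. 0 \<le> s \<and> ereal s < ereal u}" "s \<in> {0..<u}" using True by auto
      ultimately show ?thesis by simp
    next
      case False
      then have "s \<notin> {s. 0 \<le> s \<and> ereal s < ereal u}" "s \<notin> {0..<u}" by auto
      then show ?thesis by simp
    qed
  qed
  have "(\<integral>\<^sup>+ s. indicator {0..<t} s * ennreal ((wh F s)\<^sup>2) \<partial>lborel)
      = (\<integral>\<^sup>+ s. indicator {0..<u} s * ennreal ((wh F s)\<^sup>2) + indicator {u..<t} s * ennreal ((wh F s)\<^sup>2) \<partial>lborel)"
    by (rule nn_integral_cong) (use assms in \<open>simp add: indicator_def\<close>)
  also have "\<dots> = (\<integral>\<^sup>+ s. indicator {0..<u} s * ennreal ((wh F s)\<^sup>2) \<partial>lborel) + (\<integral>\<^sup>+ s. indicator {u..<t} s * ennreal ((wh F s)\<^sup>2) \<partial>lborel)"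
    by (rule nn_integral_add; rule wh_meas; simp)
  finally have eq3: "(\<integral>\<^sup>+ s. indicator {0..<t} s * ennreal ((wh F s)\<^sup>2) \<partial>lborel) = (\<integral>\<^sup>+ s. indicator {0..<u} s * ennreal ((wh F s)\<^sup>2) \<partial>lborel) + (\<integral>\<^sup>+ s. indicator {u..<t} s * ennreal ((wh F s)\<^sup>2) \<partial>lborel)" .
  have "(\<integral>\<^sup>+ s. indicator {u..<t} s * ennreal ((wh F s)\<^sup>2) \<partial>lborel) = (\<integral>\<^sup>+ s. ennreal (c\<^sup>2) * indicator {u<..<t} s \<partial>lborel)"
  proof -
    have pw: "indicator {u..<t} s * ennreal ((wh F s)\<^sup>2) = ennreal (c\<^sup>2) * indicator {u<..<t} s"
      if elim: "s \<noteq> u" for s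
      proof (cases "u < s \<and> s < t")
        case True
        have Js: "J s = J t" using assms(4) True by (meson less_imp_le)
        have "wh F s = ww s" using ww_wh[OF assms(3), of s] True unfolding F_def by simp
        also have "ww s = c" unfolding ww_J Js c_def F_def ..
        finally have "wh F s = c" .
        moreover have "s \<in> {u..<t}" "s \<in> {u<..<t}" using True by auto
        ultimately show ?thesis by simp
      next
        case False
        then have "s \<notin> {u..<t}" "s \<notin> {u<..<t}" using elim by auto
        then show ?thesis by simp
      qed
    have AE: "AE s in lborel. indicator {u..<t} s * ennreal ((wh F s)\<^sup>2) = ennreal (c\<^sup>2) * indicator {u<..<t} s"
      by (rule AE_mp[OF AE_lborel_singleton[of u]], rule AE_I2, use pw in blast)
    show ?thesis by (rule nn_integral_cong_AE[OF AE])
  qed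
  also have "\<dots> = ennreal (c\<^sup>2) * ennreal (t - u)"
    using nn_integral_cmult_indicator[of "{u<..<t}" lborel "ennreal (c\<^sup>2)"] assms by (simp add: mult.commute)
  also have "\<dots> = ennreal (c\<^sup>2 * (t - u))" using assms by (simp add: ennreal_mult)
  finally have eq4: "(\<integral>\<^sup>+ s. indicator {u..<t} s * ennreal ((wh F s)\<^sup>2) \<partial>lborel) = ennreal (c\<^sup>2 * (t - u))" .
  show ?thesis using eq3 eq4 unfolding eq1 eq2 c_def F_def by simp
qed

lemma sg_real: assumes "finite (J t)"
  shows "sg (ereal t) = ereal t + ereal (sum \<upsilon> (J t)) + enn2ereal (BB t)"
proof -
  have "0 \<le> sum \<upsilon> (J t)" by (rule sum_nonneg) (auto simp: J_def upos)
  then show ?thesis unfolding KL_sigma_def A_fin[OF assms] by (simp add: enn2ereal_ennreal)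
qed

lemma INCR: assumes "0 \<le> u" "u \<le> t" "finite (J t)" "\<forall>s. u < s \<and> s \<le> t \<longrightarrow> J s = J t"
  shows "sg (ereal t) = sg (ereal u) + ereal ((t - u) + sum \<upsilon> (J t - J u) + (sum \<omega> (J t))\<^sup>2 * (t - u))"
proof -
  have sub: "J u \<subseteq> J t" using J_mono assms(2) .
  then have fu: "finite (J u)" using assms(3) finite_subset by blast
  have q: "0 \<le> (sum \<omega> (J t))\<^sup>2 * (t - u)" using assms by simp
  have S: "sum \<upsilon> (J t) = sum \<upsilon> (J t - J u) + sum \<upsilon> (J u)"
    using sum.subset_diff[OF sub assms(3)] .
  have "enn2ereal (BB t) = enn2ereal (BB u) + ereal ((sum \<omega> (J t))\<^sup>2 * (t - u))"
    unfolding B_incr[OF assms] plus_ennreal.rep_eq enn2ereal_ennreal[OF q] ..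
  moreover have "0 \<le> enn2ereal (BB u)" by simp
  ultimately show ?thesis unfolding sg_real[OF assms(3)] sg_real[OF fu] S
    by (cases "enn2ereal (BB u)") (auto simp: algebra_simps)
qed

abbreviation "sgr \<equiv> KL_sigma_real \<kappa> x \<omega> \<upsilon>"
abbreviation "xn \<equiv> KL_xnext L \<kappa> x"

lemma sg0: "sg (ereal 0) = 0"
proof -
  have "J 0 = {}" unfolding J_def using xpos by force
  moreover have "BB 0 = 0" by simp
  ultimately show ?thesis using sg_real[of 0] by (simp add: zero_ereal_def zero_ennreal.rep_eq)
qed

lemma sg_inf: "sg \<infinity> = \<infinity>" unfolding KL_sigma_def by simp

lemma FORM0: assumes "0 \<le> t" "ereal t \<le> xn 0" shows "sg (ereal t) = ereal t"
proof -
  have Jt: "J t = {}" using J0 assms(2) .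
  have "\<forall>s. 0 < s \<and> s \<le> t \<longrightarrow> J s = J t"
  proof (intro allI impI)
    fix s assume "0 < s \<and> s \<le> t"
    then have "ereal s \<le> xn 0" using assms(2) by (meson ereal_less_eq(3) order_trans)
    then show "J s = J t" using J0 Jt by simp
  qed
  from INCR[OF order_refl assms(1) _ this] Jt sg0 show ?thesis by (simp add: zero_ereal_def)
qed

lemma x_lt_xn: "enat k < \<kappa> \<Longrightarrow> ereal (x k) < xn (Suc k)"
  unfolding KL_xnext_def using xsuc xL by auto

lemma xn_Suc_real: "enat (Suc k) < \<kappa> \<Longrightarrow> xn (Suc k) = ereal (x (Suc k))"
  unfolding KL_xnext_def by simp

lemma FORM: assumes k: "enat k < \<kappa>" and t: "x k < t" "ereal t \<le> xn (Suc k)"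
  shows "sg (ereal t) = sg (ereal (x k)) + ereal (\<upsilon> k + (1 + (\<Sum>i\<le>k. \<omega> i)\<^sup>2) * (t - x k))"
proof -
  have Jt: "J t = {..k}" using J_xnext[OF k t] .
  have "\<forall>s. x k < s \<and> s \<le> t \<longrightarrow> J s = J t"
  proof (intro allI impI)
    fix s assume s: "x k < s \<and> s \<le> t"
    then have "ereal s \<le> xn (Suc k)" using t(2) by (meson ereal_less_eq(3) order_trans)
    then show "J s = J t" using J_xnext[OF k] s Jt by simp
  qed
  from INCR[OF less_imp_le[OF xpos[OF k]] less_imp_le[OF t(1)] _ this] Jt J_xk[OF k]
  have "sg (ereal t) = sg (ereal (x k)) + ereal (t - x k + sum \<upsilon> ({..k} - {..<k}) + (sum \<omega> {..k})\<^sup>2 * (t - x k))"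
    by simp
  moreover have "{..k} - {..<k} = {k}" by auto
  ultimately show ?thesis by (simp add: algebra_simps)
qed

lemma sg_nonneg: "0 \<le> sg y" if "0 \<le> y" using that unfolding KL_sigma_def by simp

lemma sg_xk_fin: "enat k < \<kappa> \<Longrightarrow> sg (ereal (x k)) = ereal (sgr (x k))"
proof (induction k)
  case 0
  have "ereal (x 0) \<le> xn 0" using 0 unfolding KL_xnext_def by (simp add: zero_enat_def)
  then have "sg (ereal (x 0)) = ereal (x 0)" using FORM0 xpos[OF 0] by simp
  then show ?case unfolding KL_sigma_real_def by simp
next
  case (Suc k)
  have k: "enat k < \<kappa>" using enat_lt_trans_Suc Suc.prems .
  have "sg (ereal (x (Suc k))) = sg (ereal (x k)) + ereal (\<upsilon> k + (1 + (\<Sum>i\<le>k. \<omega> i)\<^sup>2) * (x (Suc k) - x k))"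
    using FORM[OF k xsuc[OF Suc.prems]] xn_Suc_real[OF Suc.prems] by simp
  then have "\<bar>sg (ereal (x (Suc k)))\<bar> \<noteq> \<infinity>" using Suc.IH[OF k] by simp
  then show ?case unfolding KL_sigma_real_def by (metis ereal_real')
qed

lemma sg_mono: assumes "y \<le> y'" shows "sg y \<le> sg y'"
proof -
  have 1: "(\<Sum>j. if enat j < \<kappa> \<and> ereal (x j) < y then ennreal (\<upsilon> j) else 0)
     \<le> (\<Sum>j. if enat j < \<kappa> \<and> ereal (x j) < y' then ennreal (\<upsilon> j) else 0)"
  proof (rule suminf_le[OF _ summableI summableI])
    fix j
    show "(if enat j < \<kappa> \<and> ereal (x j) < y then ennreal (\<upsilon> j) else 0)
       \<le> (if enat j < \<kappa> \<and> ereal (x j) < y' then ennreal (\<upsilon> j) else 0)"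
    proof (cases "enat j < \<kappa> \<and> ereal (x j) < y")
      case True
      then have "enat j < \<kappa> \<and> ereal (x j) < y'" using assms by (meson order_less_le_trans)
      then show ?thesis using True by simp
    next
      case False
      then show ?thesis by (simp only: if_False if_not_P zero_le)
    qed
  qed
  have 2: "(\<integral>\<^sup>+ t. indicator {t. 0 \<le> t \<and> ereal t < y} t * ennreal ((ww t)\<^sup>2) \<partial>lborel)
     \<le> (\<integral>\<^sup>+ t. indicator {t. 0 \<le> t \<and> ereal t < y'} t * ennreal ((ww t)\<^sup>2) \<partial>lborel)"
  proof (rule nn_integral_mono)
    fix t
    show "indicator {t. 0 \<le> t \<and> ereal t < y} t * ennreal ((ww t)\<^sup>2) \<le> indicator {t. 0 \<le> t \<and> ereal t < y'} t * ennreal ((ww t)\<^sup>2)"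
    proof (cases "0 \<le> t \<and> ereal t < y")
      case True
      then have "0 \<le> t \<and> ereal t < y'" using assms by (meson order_less_le_trans)
      then show ?thesis using True by simp
    qed simp
  qed
  show ?thesis unfolding KL_sigma_def
    by (rule add_mono[OF add_mono[OF assms 1[unfolded less_eq_ennreal.rep_eq]] 2[unfolded less_eq_ennreal.rep_eq]])
qed

lemma sg_ge: "y \<le> sg y" unfolding KL_sigma_def
  by (rule add_increasing2[OF enn2ereal_nonneg add_increasing2[OF enn2ereal_nonneg order_refl]])

lemma sigma_plus: assumes k: "enat k < \<kappa>"
  shows "KL_sigma_plus \<kappa> x \<omega> \<upsilon> k = sgr (x k) + \<upsilon> k"
proof -
  obtain b where b: "ereal (x k) < ereal b" "ereal b < xn (Suc k)" using ereal_dense2[OF x_lt_xn[OF k]] by blast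
  define c where "c = 1 + (\<Sum>i\<le>k. \<omega> i)\<^sup>2"
  have ev0: "eventually (\<lambda>t. t \<in> {x k<..<b}) (at_right (x k))"
    using eventually_at_right_real[of "x k" b] b(1) by simp
  have ev: "eventually (\<lambda>t. sgr (x k) + \<upsilon> k + c * (t - x k) = sgr t) (at_right (x k))"
    using ev0
  proof (rule eventually_mono)
    fix t assume t: "t \<in> {x k<..<b}"
    then have tx: "ereal t \<le> xn (Suc k)" using b(2) by (metis greaterThanLessThan_iff ereal_less_eq(3) less_imp_le order_trans)
    have tk: "x k < t" using t by simp
    have "sg (ereal t) = sg (ereal (x k)) + ereal (\<upsilon> k + c * (t - x k))"
      unfolding c_def by (rule FORM[OF k tk tx])
    then have "sg (ereal t) = ereal (sgr (x k) + \<upsilon> k + c * (t - x k))"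
      unfolding sg_xk_fin[OF k] by simp
    then show "sgr (x k) + \<upsilon> k + c * (t - x k) = sgr t" unfolding KL_sigma_real_def by simp
  qed
  have "((\<lambda>t. sgr (x k) + \<upsilon> k + c * (t - x k)) \<longlongrightarrow> sgr (x k) + \<upsilon> k + c * (x k - x k)) (at_right (x k))"
    by (rule tendsto_add[OF tendsto_const tendsto_mult[OF tendsto_const tendsto_diff[OF tendsto_ident_at tendsto_const]]])
  then have "((\<lambda>t. sgr (x k) + \<upsilon> k + c * (t - x k)) \<longlongrightarrow> sgr (x k) + \<upsilon> k) (at_right (x k))" by simp
  then have "(sgr \<longlongrightarrow> sgr (x k) + \<upsilon> k) (at_right (x k))"
    using ev by (rule Lim_transform_eventually)
  then show ?thesis unfolding KL_sigma_plus_def by (rule tendsto_Lim[OF trivial_limit_at_right_real])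
qed

abbreviation "xi \<equiv> KL_xi L \<kappa> x \<omega> \<upsilon>"

lemma XI: assumes "0 \<le> a" "ereal a < L" "sg (ereal a) \<le> ereal s"
    "\<And>t. a < t \<Longrightarrow> ereal t < L \<Longrightarrow> ereal s < sg (ereal t)"
  shows "xi s = a"
  unfolding KL_xi_def
proof (rule cSup_eq_maximum)
  show "a \<in> {t. 0 \<le> t \<and> ereal t < L \<and> sg (ereal t) \<le> ereal s}" using assms by auto
  fix t assume "t \<in> {t. 0 \<le> t \<and> ereal t < L \<and> sg (ereal t) \<le> ereal s}"
  then have t: "ereal t < L" "sg (ereal t) \<le> ereal s" by auto
  show "t \<le> a"
  proof (rule ccontr)
    assume "\<not> t \<le> a"
    then have "ereal s < sg (ereal t)" using assms(4) t(1) by simp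
    then show False using t(2) by simp
  qed
qed

lemma XIL: assumes "L = ereal l" "sg L < ereal s" shows "xi s = l"
proof -
  have l: "0 < l" using Lpos assms(1) by simp
  have "{t. 0 \<le> t \<and> ereal t < L \<and> sg (ereal t) \<le> ereal s} = {0..<l}"
  proof (intro set_eqI iffI)
    fix t assume "t \<in> {0..<l}"
    then have "sg (ereal t) \<le> sg L" using assms(1) by (intro sg_mono) simp
    then show "t \<in> {t. 0 \<le> t \<and> ereal t < L \<and> sg (ereal t) \<le> ereal s}"
      using assms \<open>t \<in> {0..<l}\<close> by auto
  qed (use assms in auto)
  then show ?thesis unfolding KL_xi_def using l by (simp add: cSup_atLeastLessThan)
qed

lemma DXI: assumes "open U" "s \<in> U" "\<And>s'. s' \<in> U \<Longrightarrow> g s' = xi s'" "(g has_real_derivative D) (at s)"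
  shows "deriv xi s = D"
  by (rule DERIV_imp_deriv, rule has_field_derivative_transform_within_open[OF assms(4,1,2)]) (use assms(3) in blast)

lemma Hpi2: "Hth (pi/2) = mat2 0 0 0 1" unfolding Hth_def by simp
lemma H00: "Hth 0 = mat2 1 0 0 0" unfolding Hth_def by simp
lemma Hcot: assumes "0 < \<theta>" "\<theta> < pi" "cot \<theta> = c"
  shows "Hth \<theta> = mat2 (c\<^sup>2 / (1 + c\<^sup>2)) (c / (1 + c\<^sup>2)) (c / (1 + c\<^sup>2)) (1 / (1 + c\<^sup>2))"
proof -
  have sp: "0 < sin \<theta>" using assms by (simp add: sin_gt_zero)
  have cc: "cos \<theta> = c * sin \<theta>" using assms(3) sp unfolding cot_def by (simp add: field_simps)
  have "(sin \<theta>)\<^sup>2 + (cos \<theta>)\<^sup>2 = 1" by simp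
  then have s2: "(sin \<theta>)\<^sup>2 * (1 + c\<^sup>2) = 1" unfolding cc by (simp add: algebra_simps power_mult_distrib)
  have pos: "0 < 1 + c\<^sup>2" by (simp add: add_pos_nonneg)
  have s2': "(sin \<theta>)\<^sup>2 = 1 / (1 + c\<^sup>2)" using s2 pos by (simp add: field_simps)
  have "(cos \<theta>)\<^sup>2 = c\<^sup>2 / (1 + c\<^sup>2)" unfolding cc power_mult_distrib s2' by simp
  moreover have "cos \<theta> * sin \<theta> = c / (1 + c\<^sup>2)"
  proof -
    have "cos \<theta> * sin \<theta> = c * (sin \<theta>)\<^sup>2" unfolding cc by (simp add: power2_eq_square)
    then show ?thesis unfolding s2' by simp
  qed
  ultimately show ?thesis unfolding Hth_def s2' by simp
qed

lemma KLH: "KL_H L \<kappa> x \<omega> \<upsilon> s = mat2 (1 - deriv xi s) (deriv xi s * ww (xi s)) (deriv xi s * ww (xi s)) (deriv xi s)"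
  unfolding KL_H_def Let_def ..

lemma xn_le_L: "xn k \<le> L" by (rule xnext_le_L)

lemma C1: assumes "0 < s" "ereal s < xn 0" shows "KL_H L \<kappa> x \<omega> \<upsilon> s = Hth (pi / 2)"
proof -
  obtain b where b: "ereal s < ereal b" "ereal b < xn 0" using ereal_dense2[OF assms(2)] by blast
  have eq: "s' = xi s'" if s': "s' \<in> {0<..<b}" for s'
  proof (rule sym, rule XI)
    have "ereal s' < ereal b" using s' by simp
    then have sx: "ereal s' < xn 0" using b(2) by (rule order.strict_trans)
    then show "sg (ereal s') \<le> ereal s'" using FORM0[of s'] s' by simp
    show "0 \<le> s'" using s' by simp
    show "ereal s' < L" using sx xn_le_L[of 0] by (rule order_less_le_trans)
    fix t assume "s' < t" "ereal t < L"
    then have "ereal s' < ereal t" by simp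
    then show "ereal s' < sg (ereal t)" using sg_ge[of "ereal t"] by (rule order_less_le_trans)
  qed
  have sU: "s \<in> {0<..<b}" using assms b by simp
  have d: "deriv xi s = 1" by (rule DXI[of "{0<..<b}" s "\<lambda>s. s", OF _ sU eq DERIV_ident]) simp
  have "xi s = s" using eq[OF sU] by simp
  moreover have "ww s = 0" unfolding ww_J using J0[of s] assms(2) by simp
  ultimately show ?thesis unfolding KLH d Hpi2 by simp
qed

lemma SGN: assumes k: "enat k < \<kappa>" shows "ereal (sgr (x k) + \<upsilon> k) < sg (xn (Suc k))"
proof (cases "xn (Suc k)")
  case (real X)
  have X: "x k < X" using x_lt_xn[OF k] real by simp
  have "sg (xn (Suc k)) = sg (ereal (x k)) + ereal (\<upsilon> k + (1 + (\<Sum>i\<le>k. \<omega> i)\<^sup>2) * (X - x k))"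
    using FORM[OF k X] real by simp
  moreover have "0 < (1 + (\<Sum>i\<le>k. \<omega> i)\<^sup>2) * (X - x k)" using X by (simp add: add_pos_nonneg)
  ultimately show ?thesis unfolding sg_xk_fin[OF k] by simp
next
  case PInf then show ?thesis using sg_inf by simp
next
  case MInf then show ?thesis using x_lt_xn[OF k] by simp
qed

lemma SGT: assumes k: "enat k < \<kappa>" and t: "x k < t" "ereal t < L" and r: "r < sg (xn (Suc k))"
  and h: "ereal t \<le> xn (Suc k) \<Longrightarrow> r < sg (ereal t)"
  shows "r < sg (ereal t)"
proof (cases "ereal t \<le> xn (Suc k)")
  case True then show ?thesis using h by simp
next
  case False
  have sk: "enat (Suc k) < \<kappa>"
  proof (rule ccontr)
    assume "\<not> enat (Suc k) < \<kappa>"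
    then have "xn (Suc k) = L" unfolding KL_xnext_def by simp
    then show False using False t(2) by simp
  qed
  then have "sg (xn (Suc k)) \<le> sg (ereal t)" using False by (intro sg_mono) simp
  then show ?thesis using r by simp
qed

lemma C2: assumes k: "enat k < \<kappa>" and s: "sg (ereal (x k)) < ereal s" "s < KL_sigma_plus \<kappa> x \<omega> \<upsilon> k"
  shows "KL_H L \<kappa> x \<omega> \<upsilon> s = Hth 0"
proof -
  define U where "U = {sgr (x k)<..<sgr (x k) + \<upsilon> k}"
  have eq: "x k = xi s'" if s': "s' \<in> U" for s'
  proof (rule sym, rule XI)
    show "0 \<le> x k" using xpos[OF k] by simp
    show "ereal (x k) < L" using xL[OF k] .
    show "sg (ereal (x k)) \<le> ereal s'" using s' unfolding U_def sg_xk_fin[OF k] by simp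
    fix t assume t: "x k < t" "ereal t < L"
    have "ereal s' < ereal (sgr (x k) + \<upsilon> k)" using s' unfolding U_def by simp
    then have r: "ereal s' < sg (xn (Suc k))" using SGN[OF k] by (rule order.strict_trans)
    show "ereal s' < sg (ereal t)"
    proof (rule SGT[OF k t r])
      assume "ereal t \<le> xn (Suc k)"
      then have "sg (ereal t) = ereal (sgr (x k) + \<upsilon> k + (1 + (\<Sum>i\<le>k. \<omega> i)\<^sup>2) * (t - x k))"
        using FORM[OF k t(1)] unfolding sg_xk_fin[OF k] by simp
      moreover have "0 < (1 + (\<Sum>i\<le>k. \<omega> i)\<^sup>2) * (t - x k)" using t by (simp add: add_pos_nonneg)
      ultimately show "ereal s' < sg (ereal t)" using s' unfolding U_def by simp
    qed
  qed
  have sU: "s \<in> U" using s unfolding U_def sigma_plus[OF k] sg_xk_fin[OF k] by simp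
  have d: "deriv xi s = 0"
    by (rule DXI[of U s "\<lambda>s. x k", OF _ sU eq DERIV_const]) (simp add: U_def)
  show ?thesis unfolding KLH d H00 by simp
qed

lemma C3: assumes k: "enat k < \<kappa>" and s: "KL_sigma_plus \<kappa> x \<omega> \<upsilon> k < s" "ereal s < sg (xn (Suc k))"
  and th: "0 < \<theta>" "\<theta> < pi" "cot \<theta> = (\<Sum>i\<le>k. \<omega> i)"
  shows "KL_H L \<kappa> x \<omega> \<upsilon> s = Hth \<theta>"
proof -
  define W where "W = (\<Sum>i\<le>k. \<omega> i)"
  define c where "c = 1 + W\<^sup>2"
  have c: "0 < c" unfolding c_def by (simp add: add_pos_nonneg)
  define sp where "sp = sgr (x k) + \<upsilon> k"
  obtain b where b: "ereal s < ereal b" "ereal b < sg (xn (Suc k))" using ereal_dense2[OF s(2)] by blast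
  define U where "U = {sp<..<b}"
  define a where "a = (\<lambda>s'. x k + (s' - sp) / c)"
  have FK: "sg (ereal t) = ereal (sp + c * (t - x k))" if "x k < t" "ereal t \<le> xn (Suc k)" for t
    using FORM[OF k that] unfolding sg_xk_fin[OF k] sp_def c_def W_def by simp
  have aU: "x k < a s'" "ereal (a s') < xn (Suc k)" "sg (ereal (a s')) = ereal s'" if s': "s' \<in> U" for s'
  proof -
    show xa: "x k < a s'" using s' c unfolding U_def a_def by simp
    show xn: "ereal (a s') < xn (Suc k)"
    proof (cases "xn (Suc k)")
      case (real X)
      have X: "x k < X" using x_lt_xn[OF k] real by simp
      have S1: "sg (xn (Suc k)) = ereal (sp + c * (X - x k))" using FK[OF X] real by simp
      have "s' < b" using s' unfolding U_def by simp
      then have "s' < sp + c * (X - x k)" using b(2) S1 by simp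
      then have "(s' - sp) / c < X - x k" using c by (simp add: field_simps)
      then show ?thesis using real unfolding a_def by simp
    next
      case PInf then show ?thesis by simp
    next
      case MInf then show ?thesis using x_lt_xn[OF k] by simp
    qed
    show "sg (ereal (a s')) = ereal s'" using FK[OF xa less_imp_le[OF xn]] c unfolding a_def by simp
  qed
  have eq: "a s' = xi s'" if s': "s' \<in> U" for s'
  proof (rule sym, rule XI)
    show "0 \<le> a s'" using aU(1)[OF s'] xpos[OF k] by simp
    show "ereal (a s') < L" using aU(2)[OF s'] xn_le_L[of "Suc k"] by simp
    show "sg (ereal (a s')) \<le> ereal s'" using aU(3)[OF s'] by simp
    fix t assume t: "a s' < t" "ereal t < L"
    have t1: "x k < t" using t aU(1)[OF s'] by simp
    have "ereal s' < ereal b" using s' unfolding U_def by simp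
    then have r: "ereal s' < sg (xn (Suc k))" using b(2) by (rule order.strict_trans)
    show "ereal s' < sg (ereal t)"
    proof (rule SGT[OF k t1 t(2) r])
      assume "ereal t \<le> xn (Suc k)"
      then have "sg (ereal t) = ereal (sp + c * (t - x k))" using FK t1 by simp
      moreover have "s' < sp + c * (t - x k)" using t(1) c unfolding a_def by (simp add: field_simps)
      ultimately show "ereal s' < sg (ereal t)" by simp
    qed
  qed
  have sU: "s \<in> U" using s b unfolding U_def sigma_plus[OF k] sp_def by simp
  have "((\<lambda>s'. x k + (s' - sp) / c) has_real_derivative 0 + (1 - 0) / c) (at s)"
    by (intro DERIV_add DERIV_const DERIV_cdivide DERIV_diff DERIV_ident)
  then have der: "(a has_real_derivative 1 / c) (at s)" unfolding a_def by simp
  have d: "deriv xi s = 1 / c"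
    by (rule DXI[of U s a, OF _ sU eq der]) (simp add: U_def)
  have w: "ww (xi s) = W" unfolding eq[OF sU, symmetric] ww_J W_def
    using J_xnext[OF k aU(1)[OF sU] less_imp_le[OF aU(2)[OF sU]]] by simp
  have e2: "1 - 1 / c = W\<^sup>2 / c" using c unfolding c_def by (simp add: field_simps)
  have Hc: "Hth \<theta> = mat2 (W\<^sup>2 / c) (W / c) (W / c) (1 / c)"
    unfolding W_def c_def by (rule Hcot[OF th])
  have e3: "1 / c * W = W / c" by simp
  show ?thesis unfolding KLH d Hc w e2 e3 ..
qed

lemma C4: assumes "sg L < ereal s" shows "KL_H L \<kappa> x \<omega> \<upsilon> s = Hth 0"
proof -
  obtain l where l: "L = ereal l" using assms sg_inf Lpos by (cases L) auto
  have "0 \<le> sg L" using Lpos by (intro sg_nonneg) simp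
  then obtain r where r: "sg L = ereal r" using assms by (cases "sg L") auto
  have eq: "l = xi s'" if "s' \<in> {r<..}" for s' using XIL[OF l] that r by simp
  have sU: "s \<in> {r<..}" using assms r by simp
  have d: "deriv xi s = 0"
    by (rule DXI[of "{r<..}" s "\<lambda>s. l", OF _ sU eq DERIV_const]) simp
  show ?thesis unfolding KLH d H00 by simp
qed

definition startp :: "nat \<times> bool \<Rightarrow> ereal" where
  "startp st = (case st of (m, True) \<Rightarrow> ereal (sgr (x (m - 1)))
     | (m, False) \<Rightarrow> (if m = 0 then 0 else ereal (sgr (x (m - 1)) + \<upsilon> (m - 1))))"
definition endp :: "nat \<times> bool \<Rightarrow> ereal" where
  "endp st = (case st of (m, True) \<Rightarrow> ereal (sgr (x (m - 1)) + \<upsilon> (m - 1)) | (m, False) \<Rightarrow> sg (xn m))"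
definition targ :: "nat \<times> bool \<Rightarrow> real" where
  "targ st = (case st of (m, True) \<Rightarrow> 0 | (m, False) \<Rightarrow> ang (\<Sum>i<m. \<omega> i))"
definition valid :: "nat \<times> bool \<Rightarrow> bool" where
  "valid st \<longleftrightarrow> enat (fst st) \<le> \<kappa> \<and> (snd st \<longrightarrow> 0 < fst st \<and> 0 < \<upsilon> (fst st - 1))"

lemma xn0_pos: "0 < xn 0"
  unfolding KL_xnext_def using xpos Lpos by (auto simp: zero_enat_def)

lemma sg_xn0: "sg (xn 0) = xn 0"
proof (cases "xn 0")
  case (real X)
  then have "0 \<le> X" using xn0_pos by simp
  then show ?thesis using FORM0[of X] real by simp
next
  case PInf then show ?thesis using sg_inf by simp
next
  case MInf then show ?thesis using xn0_pos by simp
qed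

lemma VALID_H: assumes v: "valid st" and s: "0 \<le> s" "startp st < ereal s" "ereal s < endp st"
  shows "KL_H L \<kappa> x \<omega> \<upsilon> s = Hth (targ st)"
proof -
  obtain m b where st0: "st = (m, b)" by fastforce
  consider (T) "st = (m, True)" | (F) "st = (m, False)" using st0 by (cases b) auto
  then show ?thesis
  proof cases
    case T
    then obtain k where m: "m = Suc k" using v unfolding valid_def by (cases m) auto
    have st: "st = (Suc k, True)" using T m by simp
    have k: "enat k < \<kappa>" using v st unfolding valid_def by (simp add: Suc_ile_eq)
    have "KL_H L \<kappa> x \<omega> \<upsilon> s = Hth 0"
    proof (rule C2[OF k])
      show "sg (ereal (x k)) < ereal s" using s(2) unfolding st startp_def sg_xk_fin[OF k] by simp
      show "s < KL_sigma_plus \<kappa> x \<omega> \<upsilon> k" using s(3) unfolding st endp_def sigma_plus[OF k] by simp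
    qed
    moreover have "targ st = 0" unfolding st targ_def by simp
    ultimately show ?thesis by simp
  next
    case F
    show ?thesis
    proof (cases m)
      case 0
      have st: "st = (0, False)" using F 0 by simp
      have "KL_H L \<kappa> x \<omega> \<upsilon> s = Hth (pi / 2)"
      proof (rule C1)
        show "0 < s" using s(2) unfolding st startp_def by simp
        show "ereal s < xn 0" using s(3) sg_xn0 unfolding st endp_def by simp
      qed
      moreover have "targ st = pi / 2" unfolding targ_def st ang_def by simp
      ultimately show ?thesis by (simp only:)
    next
      case (Suc k)
      have st: "st = (Suc k, False)" using F Suc by simp
      have k: "enat k < \<kappa>" using v st unfolding valid_def by (simp add: Suc_ile_eq)
      have t: "targ st = ang (\<Sum>i\<le>k. \<omega> i)" unfolding targ_def st by (simp add: lessThan_Suc_atMost)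
      show ?thesis unfolding t
      proof (rule C3[OF k])
        show "KL_sigma_plus \<kappa> x \<omega> \<upsilon> k < s" using s(2) unfolding st startp_def sigma_plus[OF k] by simp
        show "ereal s < sg (xn (Suc k))" using s(3) unfolding st endp_def by simp
      qed (simp_all add: ang_bounds ang_cot)
    qed
  qed
qed

lemma VALID_LT: assumes v: "valid st" shows "startp st < endp st"
proof -
  obtain m b where st0: "st = (m, b)" by fastforce
  consider (T) "st = (m, True)" | (F) "st = (m, False)" using st0 by (cases b) auto
  then show ?thesis
  proof cases
    case T
    then have "0 < \<upsilon> (m - 1)" using v unfolding valid_def by simp
    then show ?thesis unfolding startp_def endp_def T by simp
  next
    case F
    show ?thesis
    proof (cases m)
      case 0 then show ?thesis unfolding startp_def endp_def F using sg_xn0 xn0_pos by simp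
    next
      case (Suc k)
      have k: "enat k < \<kappa>" using v F Suc unfolding valid_def by (simp add: Suc_ile_eq)
      show ?thesis unfolding startp_def endp_def F Suc using SGN[OF k] by simp
    qed
  qed
qed

lemma CHAIN: assumes v: "valid st" "valid (nxt \<upsilon> st)" shows "startp (nxt \<upsilon> st) = endp st"
proof -
  obtain m b where st0: "st = (m, b)" by fastforce
  consider (T) "st = (m, True)" | (F) "st = (m, False)" using st0 by (cases b) auto
  then show ?thesis
  proof cases
    case T
    then obtain k where m: "m = Suc k" using v unfolding valid_def by (cases m) auto
    show ?thesis unfolding T m startp_def endp_def by simp
  next
    case F
    have k: "enat m < \<kappa>" using v(2) unfolding F valid_def by (auto simp: Suc_ile_eq split: if_splits)
    have xm: "xn m = ereal (x m)" unfolding KL_xnext_def using k by simp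
    show ?thesis
    proof (cases "0 < \<upsilon> m")
      case True
      then show ?thesis unfolding F startp_def endp_def using xm sg_xk_fin[OF k] by simp
    next
      case F2: False
      then have "\<upsilon> m = 0" using upos[OF k] by simp
      then show ?thesis unfolding F startp_def endp_def using F2 xm sg_xk_fin[OF k] by simp
    qed
  qed
qed

lemma NC: assumes v: "valid st" "valid (nxt \<upsilon> st)"
  shows "\<nexists>z::int. targ (nxt \<upsilon> st) = targ st + of_int z * pi"
proof
  assume "\<exists>z::int. targ (nxt \<upsilon> st) = targ st + of_int z * pi"
  then obtain z :: int where z: "targ (nxt \<upsilon> st) = targ st + of_int z * pi" by blast
  obtain m b where st0: "st = (m, b)" by fastforce
  consider (T) "st = (m, True)" | (F) "st = (m, False)" using st0 by (cases b) auto
  then show False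
  proof cases
    case T
    have "ang (\<Sum>i<m. \<omega> i) = of_int z * pi" using z unfolding T targ_def by simp
    then show False using ang_bounds[of "\<Sum>i<m. \<omega> i"] int_pi_between[of z] by simp
  next
    case F
    have k: "enat m < \<kappa>" using v(2) unfolding F valid_def by (auto simp: Suc_ile_eq split: if_splits)
    show False
    proof (cases "0 < \<upsilon> m")
      case True
      have "0 = ang (\<Sum>i<m. \<omega> i) + of_int z * pi" using z True unfolding F targ_def by simp
      then have "of_int (- z) * pi = ang (\<Sum>i<m. \<omega> i)" by simp
      then show False using ang_bounds[of "\<Sum>i<m. \<omega> i"] int_pi_between[of "- z"] by simp
    next
      case F2: False
      then have "\<upsilon> m = 0" using upos[OF k] by simp
      then have om: "\<omega> m \<noteq> 0" using wu[OF k] by simp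
      have "ang (\<Sum>i<Suc m. \<omega> i) = ang (\<Sum>i<m. \<omega> i) + of_int z * pi"
        using z F2 unfolding F targ_def by simp
      then have e: "arctan (\<Sum>i<m. \<omega> i) - arctan (\<Sum>i<Suc m. \<omega> i) = of_int z * pi"
        unfolding ang_def by simp
      have "\<bar>of_int z * pi\<bar> < pi" unfolding e[symmetric]
        using arctan_bounded[of "\<Sum>i<m. \<omega> i"] arctan_bounded[of "\<Sum>i<Suc m. \<omega> i"] by linarith
      then have "z = 0" by (rule int_pi_small)
      then have "arctan (\<Sum>i<m. \<omega> i) = arctan (\<Sum>i<Suc m. \<omega> i)" using e by simp
      then have "(\<Sum>i<m. \<omega> i) = (\<Sum>i<Suc m. \<omega> i)" by (metis arctan_less_iff not_less_iff_gr_or_eq)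
      then show False using om by simp
    qed
  qed
qed

lemma SUP_eventually_const:
  fixes f :: "nat \<Rightarrow> ennreal"
  assumes "\<And>m. f m \<le> c" "f n = c" shows "(SUP m. f m) = c"
  by (rule antisym) (auto intro: SUP_least assms(1) SUP_upper2[where i=n] simp: assms(2))

lemma SGL: assumes inf: "\<kappa> = \<infinity>" shows "(\<lambda>m. sg (ereal (x m))) \<longlonglongrightarrow> sg L"
proof -
  have allk: "enat j < \<kappa>" for j using inf by simp
  have xm: "m \<le> m' \<Longrightarrow> x m \<le> x m'" for m m' using xmono_le allk by blast
  define f where "f = (\<lambda>m j. if enat j < \<kappa> \<and> ereal (x j) < ereal (x m) then ennreal (\<upsilon> j) else 0)"
  define A where "A = (\<lambda>m. \<Sum>j. f m j)"
  define AL where "AL = (\<Sum>j. if enat j < \<kappa> \<and> ereal (x j) < L then ennreal (\<upsilon> j) else 0)"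
  have fle: "f m j \<le> ennreal (\<upsilon> j)" for m j unfolding f_def by simp
  have finc: "incseq (\<lambda>m. f m j)" for j
  proof (rule incseq_SucI)
    fix m show "f m j \<le> f (Suc m) j"
      unfolding f_def using xm[of m "Suc m"] by (auto intro: order_less_le_trans)
  qed
  have fSUP: "(SUP m. f m j) = (if enat j < \<kappa> \<and> ereal (x j) < L then ennreal (\<upsilon> j) else 0)" for j
  proof -
    have "f (Suc j) j = ennreal (\<upsilon> j)" unfolding f_def using xsuc[of j] allk by simp
    then have "(SUP m. f m j) = ennreal (\<upsilon> j)" by (rule SUP_eventually_const[of "\<lambda>m. f m j", OF fle])
    then show ?thesis using xL[OF allk[of j]] allk by simp
  qed
  have AL: "AL = (SUP m. A m)" unfolding AL_def A_def fSUP[symmetric] by (rule ennreal_suminf_SUP_eq[OF finc])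
  have Ainc: "incseq A" unfolding A_def
    by (rule incseq_SucI, rule suminf_le[OF _ summableI summableI]) (use finc in \<open>auto simp: incseq_Suc_iff\<close>)
  have Alim: "A \<longlonglongrightarrow> AL" unfolding AL using LIMSEQ_SUP[OF Ainc] by simp
  define g where "g = (\<lambda>t. ennreal ((ww t)\<^sup>2))"
  define h where "h = (\<lambda>m t. indicator {t. 0 \<le> t \<and> ereal t < ereal (x m)} t * g t)"
  define B where "B = (\<lambda>m. \<integral>\<^sup>+ t. h m t \<partial>lborel)"
  define BL where "BL = (\<integral>\<^sup>+ t. indicator {t. 0 \<le> t \<and> ereal t < L} t * g t \<partial>lborel)"
  have hinc: "incseq h"
  proof (rule incseq_SucI, rule le_funI)
    fix m t show "h m t \<le> h (Suc m) t"
      unfolding h_def using xm[of m "Suc m"] by (auto simp: indicator_def intro: order_less_le_trans)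
  qed
  have hmeas: "h m \<in> borel_measurable lborel" for m
  proof -
    have fin: "finite (J (x m))" using J_xk[OF allk[of m]] by simp
    have "h m = (\<lambda>t. indicator {0..<x m} t * ennreal ((wh (J (x m)) t)\<^sup>2))"
    proof
      fix t show "h m t = indicator {0..<x m} t * ennreal ((wh (J (x m)) t)\<^sup>2)"
      proof (cases "0 \<le> t \<and> t < x m")
        case True
        then have "ww t = wh (J (x m)) t" using ww_wh[OF fin, of t] by simp
        then show ?thesis using True unfolding h_def g_def by simp
      next
        case False
        then have "t \<notin> {t. 0 \<le> t \<and> ereal t < ereal (x m)}" "t \<notin> {0..<x m}" by auto
        then show ?thesis unfolding h_def by simp
      qed
    qed
    then show ?thesis using wh_meas[of "{0..<x m}" "J (x m)"] by simp
  qed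
  have hSUP: "(SUP m. h m t) = indicator {t. 0 \<le> t \<and> ereal t < L} t * g t" for t
  proof (cases "0 \<le> t \<and> ereal t < L")
    case True
    have "eventually (\<lambda>j. ereal t < ereal (x j)) sequentially"
      using order_tendstoD(1)[OF xlim[OF inf]] True by blast
    then obtain n where n: "t < x n" by (auto simp: eventually_sequentially)
    have "(SUP m. h m t) = g t"
    proof (rule SUP_eventually_const)
      show "h m t \<le> g t" for m unfolding h_def by (simp add: indicator_def)
      show "h n t = g t" unfolding h_def using True n by simp
    qed
    then show ?thesis using True by simp
  next
    case False
    have "h m t = 0" for m
    proof -
      have "ereal (x m) < L" using xL[OF allk] .
      have "t \<notin> {t. 0 \<le> t \<and> ereal t < ereal (x m)}"
      proof
        assume "t \<in> {t. 0 \<le> t \<and> ereal t < ereal (x m)}"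
        then have "0 \<le> t" "ereal t < ereal (x m)" by auto
        moreover from this(2) \<open>ereal (x m) < L\<close> have "ereal t < L" by (rule order.strict_trans)
        ultimately show False using False by simp
      qed
      then show ?thesis unfolding h_def by simp
    qed
    then show ?thesis using False by simp
  qed
  have BL: "BL = (SUP m. B m)" unfolding BL_def B_def hSUP[symmetric]
    by (rule nn_integral_monotone_convergence_SUP[OF hinc hmeas])
  have Binc: "incseq B" unfolding B_def
    by (rule incseq_SucI, rule nn_integral_mono) (use hinc in \<open>auto simp: incseq_Suc_iff le_fun_def\<close>)
  have Blim: "B \<longlonglongrightarrow> BL" unfolding BL using LIMSEQ_SUP[OF Binc] by simp
  have eA: "(\<lambda>m. enn2ereal (A m)) \<longlonglongrightarrow> enn2ereal AL"
    by (rule isCont_tendsto_compose[OF continuous_at_enn2ereal Alim])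
  have eB: "(\<lambda>m. enn2ereal (B m)) \<longlonglongrightarrow> enn2ereal BL"
    by (rule isCont_tendsto_compose[OF continuous_at_enn2ereal Blim])
  have lim1: "(\<lambda>m. ereal (x m) + enn2ereal (A m)) \<longlonglongrightarrow> L + enn2ereal AL"
    by (rule tendsto_add_ereal_nonneg[OF _ _ xlim[OF inf] eA]) (use Lpos in auto)
  have "0 \<le> L + enn2ereal AL" using Lpos by (intro add_nonneg_nonneg) auto
  then have nm: "L + enn2ereal AL \<noteq> - \<infinity>" by (metis MInfty_neq_ereal(1) ereal_infty_less_eq2(2) zero_ereal_def)
  have "(\<lambda>m. ereal (x m) + enn2ereal (A m) + enn2ereal (B m)) \<longlonglongrightarrow> L + enn2ereal AL + enn2ereal BL"
    by (rule tendsto_add_ereal_nonneg[OF nm _ lim1 eB]) simp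
  moreover have "sg (ereal (x m)) = ereal (x m) + enn2ereal (A m) + enn2ereal (B m)" for m
    unfolding KL_sigma_def A_def f_def B_def h_def g_def ..
  moreover have "sg L = L + enn2ereal AL + enn2ereal BL"
    unfolding KL_sigma_def AL_def BL_def g_def ..
  ultimately show ?thesis by simp
qed

primrec phi :: "nat \<Rightarrow> real" where
  "phi 0 = pi / 2"
| "phi (Suc n) = lift (phi n) (targ (pst \<upsilon> (Suc n)))"

lemma phi_cong: "\<exists>z::int. phi n = targ (pst \<upsilon> n) + of_int z * pi"
proof (cases n)
  case 0
  then show ?thesis by (intro exI[of _ 0]) (simp add: pst_0 targ_def ang_def)
next
  case (Suc m)
  then show ?thesis using lift_cong by simp
qed

lemma Hth_phi: "Hth (phi n) = Hth (targ (pst \<upsilon> n))"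
  using phi_cong[of n] Hth_per by auto

lemma phi_step: assumes "valid (pst \<upsilon> n)" "valid (pst \<upsilon> (Suc n))"
  shows "phi n < phi (Suc n) \<and> phi (Suc n) < phi n + pi"
proof
  show "phi n < phi (Suc n)" using lift_gt by simp
  obtain z0 :: int where z0: "phi n = targ (pst \<upsilon> n) + of_int z0 * pi" using phi_cong by blast
  have nc: "\<nexists>z::int. targ (pst \<upsilon> (Suc n)) = targ (pst \<upsilon> n) + of_int z * pi"
    using NC[OF assms(1)] assms(2) unfolding pst_Suc by simp
  have "\<nexists>z::int. targ (pst \<upsilon> (Suc n)) = phi n + of_int z * pi"
  proof
    assume "\<exists>z::int. targ (pst \<upsilon> (Suc n)) = phi n + of_int z * pi"
    then obtain z :: int where "targ (pst \<upsilon> (Suc n)) = phi n + of_int z * pi" by blast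
    then have "targ (pst \<upsilon> (Suc n)) = targ (pst \<upsilon> n) + of_int (z0 + z) * pi"
      unfolding z0 by (simp add: algebra_simps)
    then show False using nc by blast
  qed
  then show "phi (Suc n) < phi n + pi" using lift_lt by simp
qed

definition NN :: enat where
  "NN = (if \<kappa> = \<infinity> then \<infinity> else enat (idx \<upsilon> (the_enat \<kappa>)))"

lemma valid_pst: assumes "enat n \<le> NN" shows "valid (pst \<upsilon> n)"
proof -
  have inv: "snd (pst \<upsilon> n) \<longrightarrow> 0 < fst (pst \<upsilon> n) \<and> 0 < \<upsilon> (fst (pst \<upsilon> n) - 1)"
    using pst_inv by blast
  have "enat (fst (pst \<upsilon> n)) \<le> \<kappa>"
  proof (cases "\<kappa> = \<infinity>")
    case True then show ?thesis by simp
  next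
    case False
    then obtain K where K: "\<kappa> = enat K" by auto
    have "n \<le> idx \<upsilon> K" using assms K unfolding NN_def by simp
    then have "fst (pst \<upsilon> n) \<le> fst (pst \<upsilon> (idx \<upsilon> K))" using pst_mono[of \<upsilon>] unfolding incseq_def by blast
    then show ?thesis using K pst_idx by simp
  qed
  then show ?thesis using inv unfolding valid_def by simp
qed

lemma HAM: "hamburger_hamiltonian (sg L) (KL_H L \<kappa> x \<omega> \<upsilon>)"
proof -
  define y where "y = (\<lambda>n. endp (pst \<upsilon> n))"
  have vle: "valid (pst \<upsilon> k)" if "enat (Suc k) \<le> NN" for k
    using valid_pst that by (meson Suc_ile_eq less_imp_le)
  have ystart: "startp (pst \<upsilon> (Suc k)) = y k" if "enat (Suc k) \<le> NN" for k
    using CHAIN[OF vle[OF that] valid_pst[OF that, unfolded pst_Suc]] unfolding y_def pst_Suc .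
  have ystep: "y k < y (Suc k)" if "enat (Suc k) \<le> NN" for k
    using VALID_LT[OF valid_pst[OF that]] ystart[OF that] unfolding y_def by simp
  have c1: "0 < y 0" unfolding y_def pst_0 endp_def using sg_xn0 xn0_pos by simp
  have c5: "NN \<noteq> \<infinity> \<longrightarrow> (\<nexists>n::int. phi (the_enat NN) = of_int n * pi)"
  proof
    assume "NN \<noteq> \<infinity>"
    then obtain K where K: "\<kappa> = enat K" unfolding NN_def by (cases \<kappa>) auto
    have tN: "the_enat NN = idx \<upsilon> K" using K unfolding NN_def by simp
    obtain z :: int where z: "phi (idx \<upsilon> K) = targ (K, False) + of_int z * pi"
      using phi_cong[of "idx \<upsilon> K"] unfolding pst_idx by blast
    show "\<nexists>n::int. phi (the_enat NN) = of_int n * pi"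
    proof
      assume "\<exists>n::int. phi (the_enat NN) = of_int n * pi"
      then obtain n :: int where "phi (the_enat NN) = of_int n * pi" by blast
      then have "ang (\<Sum>i<K. \<omega> i) = of_int (n - z) * pi" using z unfolding tN targ_def
        by (simp add: algebra_simps)
      then show False using ang_bounds[of "\<Sum>i<K. \<omega> i"] int_pi_between[of "n - z"] by simp
    qed
  qed
  have c6: "NN \<noteq> \<infinity> \<longrightarrow> y (the_enat NN) = sg L"
  proof
    assume "NN \<noteq> \<infinity>"
    then obtain K where K: "\<kappa> = enat K" unfolding NN_def by (cases \<kappa>) auto
    have tN: "the_enat NN = idx \<upsilon> K" using K unfolding NN_def by simp
    have "xn K = L" unfolding KL_xnext_def K by simp
    then show "y (the_enat NN) = sg L" unfolding y_def tN pst_idx endp_def by simp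
  qed
  have c7: "NN = \<infinity> \<longrightarrow> y \<longlonglongrightarrow> sg L"
  proof
    assume NN: "NN = \<infinity>"
    then have inf: "\<kappa> = \<infinity>" unfolding NN_def by (cases "\<kappa> = \<infinity>") auto
    have inc: "incseq y" by (rule incseq_SucI, rule less_imp_le, rule ystep) (simp add: NN)
    have l1: "y \<longlonglongrightarrow> Sup (range y)" by (rule LIMSEQ_SUP[OF inc])
    have "(y \<circ> idx \<upsilon>) \<longlonglongrightarrow> Sup (range y)" by (rule LIMSEQ_subseq_LIMSEQ[OF l1 idx_smono])
    moreover have "(y \<circ> idx \<upsilon>) = (\<lambda>m. sg (ereal (x m)))"
    proof
      fix m have "xn m = ereal (x m)" unfolding KL_xnext_def inf by simp
      then show "(y \<circ> idx \<upsilon>) m = sg (ereal (x m))" unfolding y_def comp_def pst_idx endp_def by simp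
    qed
    ultimately have "(\<lambda>m. sg (ereal (x m))) \<longlonglongrightarrow> Sup (range y)" by simp
    then have "Sup (range y) = sg L" using SGL[OF inf] LIMSEQ_unique by blast
    then show "y \<longlonglongrightarrow> sg L" using l1 by simp
  qed
  define bad where "bad = insert 0 (range (\<lambda>n. real_of_ereal (y n)))"
  have "countable bad" unfolding bad_def by simp
  then have AEbad: "AE s in lborel. s \<notin> bad" by (intro AE_not_in countable_imp_null_set_lborel)
  have c8: "AE s in lborel. 0 \<le> s \<and> ereal s < sg L \<longrightarrow>
           (\<forall>k. enat k \<le> NN \<longrightarrow> (if k = 0 then 0 else y (k - 1)) \<le> ereal s \<longrightarrow> ereal s < y k
                \<longrightarrow> KL_H L \<kappa> x \<omega> \<upsilon> s = Hth (phi k))"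
    using AEbad
  proof (rule AE_mp, intro AE_I2 impI allI)
    fix s k assume sb: "s \<notin> bad" and s: "0 \<le> s \<and> ereal s < sg L" and k: "enat k \<le> NN"
      and st: "(if k = 0 then 0 else y (k - 1)) \<le> ereal s" and sy: "ereal s < y k"
    have sp: "startp (pst \<upsilon> k) = (if k = 0 then 0 else y (k - 1))"
    proof (cases k)
      case 0 then show ?thesis unfolding startp_def by (simp add: pst_0)
    next
      case (Suc j) then show ?thesis using ystart[of j] k by simp
    qed
    have ne: "(if k = 0 then 0 else y (k - 1)) \<noteq> ereal s"
    proof
      assume h: "(if k = 0 then 0 else y (k - 1)) = ereal s"
      show False
      proof (cases "k = 0")
        case True then show False using h sb unfolding bad_def by (simp add: zero_ereal_def)
      next
        case False
        then have "real_of_ereal (y (k - 1)) = s" using h by simp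
        then show False using sb unfolding bad_def by auto
      qed
    qed
    have "startp (pst \<upsilon> k) < ereal s" using sp st ne by simp
    then have "KL_H L \<kappa> x \<omega> \<upsilon> s = Hth (targ (pst \<upsilon> k))"
      using VALID_H[OF valid_pst[OF k]] s sy unfolding y_def by simp
    then show "KL_H L \<kappa> x \<omega> \<upsilon> s = Hth (phi k)" using Hth_phi by simp
  qed
  show ?thesis unfolding hamburger_hamiltonian_def
  proof (intro exI conjI)
    show "0 < y 0" by (rule c1)
    show "\<forall>k. enat (Suc k) \<le> NN \<longrightarrow> y k < y (Suc k)" using ystep by blast
    show "phi 0 = pi / 2" by simp
    show "\<forall>k. enat (Suc k) \<le> NN \<longrightarrow> phi k < phi (Suc k) \<and> phi (Suc k) < phi k + pi"
      using phi_step vle valid_pst by blast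
  qed (use c5 c6 c7 c8 in auto)
qed

end

theorem mainTheorem9:
  fixes L :: ereal and \<kappa> :: enat and x \<omega> \<upsilon> :: "nat \<Rightarrow> real"
  assumes "KL_string L \<kappa> x \<omega> \<upsilon>"
  shows "(AE s in lborel. 0 \<le> s \<longrightarrow>
           ((0 < s \<and> ereal s < KL_xnext L \<kappa> x 0 \<longrightarrow> KL_H L \<kappa> x \<omega> \<upsilon> s = Hth (pi / 2)) \<and>
            (\<forall>k. enat k < \<kappa> \<and> KL_sigma \<kappa> x \<omega> \<upsilon> (ereal (x k)) < ereal s
                  \<and> s < KL_sigma_plus \<kappa> x \<omega> \<upsilon> k \<longrightarrow> KL_H L \<kappa> x \<omega> \<upsilon> s = Hth 0) \<and>
            (\<forall>k \<theta>. enat k < \<kappa> \<and> KL_sigma_plus \<kappa> x \<omega> \<upsilon> k < s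
                  \<and> ereal s < KL_sigma \<kappa> x \<omega> \<upsilon> (KL_xnext L \<kappa> x (Suc k))
                  \<and> 0 < \<theta> \<and> \<theta> < pi \<and> cot \<theta> = (\<Sum>i\<le>k. \<omega> i)
                  \<longrightarrow> KL_H L \<kappa> x \<omega> \<upsilon> s = Hth \<theta>) \<and>
            (KL_sigma \<kappa> x \<omega> \<upsilon> L < ereal s \<longrightarrow> KL_H L \<kappa> x \<omega> \<upsilon> s = Hth 0)))
         \<and> hamburger_hamiltonian (KL_sigma \<kappa> x \<omega> \<upsilon> L) (KL_H L \<kappa> x \<omega> \<upsilon>)"
proof -
  interpret kls L \<kappa> x \<omega> \<upsilon> by unfold_locales (rule assms)
  show ?thesis
  proof (intro conjI)
    show "hamburger_hamiltonian (KL_sigma \<kappa> x \<omega> \<upsilon> L) (KL_H L \<kappa> x \<omega> \<upsilon>)" by (rule HAM)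
    show "AE s in lborel. 0 \<le> s \<longrightarrow>
           ((0 < s \<and> ereal s < KL_xnext L \<kappa> x 0 \<longrightarrow> KL_H L \<kappa> x \<omega> \<upsilon> s = Hth (pi / 2)) \<and>
            (\<forall>k. enat k < \<kappa> \<and> KL_sigma \<kappa> x \<omega> \<upsilon> (ereal (x k)) < ereal s
                  \<and> s < KL_sigma_plus \<kappa> x \<omega> \<upsilon> k \<longrightarrow> KL_H L \<kappa> x \<omega> \<upsilon> s = Hth 0) \<and>
            (\<forall>k \<theta>. enat k < \<kappa> \<and> KL_sigma_plus \<kappa> x \<omega> \<upsilon> k < s
                  \<and> ereal s < KL_sigma \<kappa> x \<omega> \<upsilon> (KL_xnext L \<kappa> x (Suc k))
                  \<and> 0 < \<theta> \<and> \<theta> < pi \<and> cot \<theta> = (\<Sum>i\<le>k. \<omega> i)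
                  \<longrightarrow> KL_H L \<kappa> x \<omega> \<upsilon> s = Hth \<theta>) \<and>
            (KL_sigma \<kappa> x \<omega> \<upsilon> L < ereal s \<longrightarrow> KL_H L \<kappa> x \<omega> \<upsilon> s = Hth 0))"
    proof (rule AE_I2, intro impI conjI allI)
      fix s :: real assume "0 \<le> s"
      show "0 < s \<and> ereal s < KL_xnext L \<kappa> x 0 \<Longrightarrow> KL_H L \<kappa> x \<omega> \<upsilon> s = Hth (pi / 2)"
        using C1 by blast
      fix k
      show "enat k < \<kappa> \<and> KL_sigma \<kappa> x \<omega> \<upsilon> (ereal (x k)) < ereal s \<and> s < KL_sigma_plus \<kappa> x \<omega> \<upsilon> k
            \<Longrightarrow> KL_H L \<kappa> x \<omega> \<upsilon> s = Hth 0" using C2 by blast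
      fix \<theta>
      show "enat k < \<kappa> \<and> KL_sigma_plus \<kappa> x \<omega> \<upsilon> k < s \<and> ereal s < KL_sigma \<kappa> x \<omega> \<upsilon> (KL_xnext L \<kappa> x (Suc k))
              \<and> 0 < \<theta> \<and> \<theta> < pi \<and> cot \<theta> = (\<Sum>i\<le>k. \<omega> i) \<Longrightarrow> KL_H L \<kappa> x \<omega> \<upsilon> s = Hth \<theta>"
        using C3 by blast
    next
      fix s :: real
      show "KL_sigma \<kappa> x \<omega> \<upsilon> L < ereal s \<Longrightarrow> KL_H L \<kappa> x \<omega> \<upsilon> s = Hth 0" using C4 by blast
    qed
  qed
qed

end
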